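(* Let $C$ be a finite acyclic category and let $F\colon C\to C$ be a functor. If $\mathrm{sd}(F)\colon\mathrm{sd}(C)\to\mathrm{sd}(C)$ fixes an element $\sigma\in\mathrm{sd}(C)$, i.e. $\mathrm{sd}(F)(\sigma)=\sigma$, then $\mathrm{sd}(F)(\tau)=\tau$ for all $\tau\le\sigma$ in $\mathrm{sd}(C)$.
   Context: An acyclic category is a small category in which only identities are invertible and the only endomorphisms are identities; finite means finitely many morphisms. The nerve $\Delta(C)$ is the regular trisp with vertices the objects of $C$ and one $k$-simplex for each chain $x_0\xrightarrow{\alpha_1}x_1\to\cdots\xrightarrow{\alpha_k}x_k$ of $k\ge1$ composable non-identity morphisms (a $0$-simplex being an object). The faces of such a simplex are the chains obtained by choosing a nonempty subset of the vertices $x_0,\dots,x_k$ (in order) and composing the morphisms between consecutive chosen vertices (e.g. deleting $x_0$, deleting $x_k$, or replacing $\alpha_j,\alpha_{j+1}$ by $\alpha_{j+1}\circ\alpha_j$). $\mathrm{sd}(C)$ is the face poset of $\Delta(C)$: its elements are the simplices, with $\tau\le\sigma$ iff $\tau$ is a face of $\sigma$. For a functor $F$, $\mathrm{sd}(F)$ sends the chain $x_0\xrightarrow{\alpha_1}\cdots\xrightarrow{\alpha_k}x_k$ to the chain $F(x_0)\xrightarrow{F(\alpha_1)}\cdots\xrightarrow{F(\alpha_k)}F(x_k)$ (the simplex of $\Delta(C)$ it determines). *)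

theory Defs
  imports Main
begin

text \<open>Small categories given explicitly by object set, morphism set, domain, codomain,
identities and composition (Comp g f = g o f, defined when Cod f = Dom g).\<close>

record ('o,'m) cat =
  Obj  :: "'o set"
  Mor  :: "'m set"
  Dom  :: "'m \<Rightarrow> 'o"
  Cod  :: "'m \<Rightarrow> 'o"
  Id   :: "'o \<Rightarrow> 'm"
  Comp :: "'m \<Rightarrow> 'm \<Rightarrow> 'm"

definition category :: "('o,'m) cat \<Rightarrow> bool" where
  "category C \<longleftrightarrow>
     (\<forall>f\<in>Mor C. Dom C f \<in> Obj C \<and> Cod C f \<in> Obj C) \<and>
     (\<forall>x\<in>Obj C. Id C x \<in> Mor C \<and> Dom C (Id C x) = x \<and> Cod C (Id C x) = x) \<and>
     (\<forall>f\<in>Mor C. \<forall>g\<in>Mor C. Cod C f = Dom C g \<longrightarrow>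
        Comp C g f \<in> Mor C \<and> Dom C (Comp C g f) = Dom C f \<and> Cod C (Comp C g f) = Cod C g) \<and>
     (\<forall>f\<in>Mor C. Comp C f (Id C (Dom C f)) = f \<and> Comp C (Id C (Cod C f)) f = f) \<and>
     (\<forall>f\<in>Mor C. \<forall>g\<in>Mor C. \<forall>h\<in>Mor C. Cod C f = Dom C g \<and> Cod C g = Dom C h \<longrightarrow>
        Comp C h (Comp C g f) = Comp C (Comp C h g) f)"

definition is_identity :: "('o,'m) cat \<Rightarrow> 'm \<Rightarrow> bool" where
  "is_identity C f \<longleftrightarrow> (\<exists>x\<in>Obj C. f = Id C x)"

definition is_iso :: "('o,'m) cat \<Rightarrow> 'm \<Rightarrow> bool" where
  "is_iso C f \<longleftrightarrow> f \<in> Mor C \<and> (\<exists>g\<in>Mor C. Dom C g = Cod C f \<and> Cod C g = Dom C f \<and>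
      Comp C g f = Id C (Dom C f) \<and> Comp C f g = Id C (Cod C f))"

definition acyclic_category :: "('o,'m) cat \<Rightarrow> bool" where
  "acyclic_category C \<longleftrightarrow> category C \<and>
     (\<forall>f\<in>Mor C. is_iso C f \<longrightarrow> is_identity C f) \<and>
     (\<forall>f\<in>Mor C. Dom C f = Cod C f \<longrightarrow> is_identity C f)"

definition finite_category :: "('o,'m) cat \<Rightarrow> bool" where
  "finite_category C \<longleftrightarrow> finite (Mor C)"

definition is_functor :: "('o,'m) cat \<Rightarrow> ('p,'n) cat \<Rightarrow> ('o \<Rightarrow> 'p) \<Rightarrow> ('m \<Rightarrow> 'n) \<Rightarrow> bool" where
  "is_functor C D Fo Fm \<longleftrightarrow>
     (\<forall>x\<in>Obj C. Fo x \<in> Obj D \<and> Fm (Id C x) = Id D (Fo x)) \<and>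
     (\<forall>f\<in>Mor C. Fm f \<in> Mor D \<and> Dom D (Fm f) = Fo (Dom C f) \<and> Cod D (Fm f) = Fo (Cod C f)) \<and>
     (\<forall>f\<in>Mor C. \<forall>g\<in>Mor C. Cod C f = Dom C g \<longrightarrow> Fm (Comp C g f) = Comp D (Fm g) (Fm f))"

text \<open>Simplices of the nerve: a chain x0 --a1--> x1 ... --ak--> xk, represented as the pair
  (x0, [a1,...,ak]) of composable non-identity morphisms (k = 0 gives the object x0).\<close>
type_synonym ('o,'m) simplex = "'o \<times> 'm list"

definition is_simplex :: "('o,'m) cat \<Rightarrow> ('o,'m) simplex \<Rightarrow> bool" where
  "is_simplex C s \<longleftrightarrow> (case s of (x, as) \<Rightarrow>
     x \<in> Obj C \<and> set as \<subseteq> Mor C \<and> (\<forall>a\<in>set as. \<not> is_identity C a) \<and>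
     (as \<noteq> [] \<longrightarrow> Dom C (hd as) = x) \<and>
     (\<forall>i. Suc i < length as \<longrightarrow> Cod C (as ! i) = Dom C (as ! Suc i)))"

definition vert :: "('o,'m) cat \<Rightarrow> ('o,'m) simplex \<Rightarrow> nat \<Rightarrow> 'o" where
  "vert C s i = (if i = 0 then fst s else Cod C (snd s ! (i - 1)))"

definition comp_list :: "('o,'m) cat \<Rightarrow> 'm list \<Rightarrow> 'm" where
  "comp_list C as = foldl (\<lambda>acc b. Comp C b acc) (hd as) (tl as)"

text \<open>The face spanned by the vertices with indices is = [i0 < i1 < ... < im]:
  consecutive chosen vertices are joined by the composite of the morphisms between them.\<close>
definition face :: "('o,'m) cat \<Rightarrow> ('o,'m) simplex \<Rightarrow> nat list \<Rightarrow> ('o,'m) simplex" where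
  "face C s is = (vert C s (hd is),
     map (\<lambda>l. comp_list C (take (is ! Suc l - is ! l) (drop (is ! l) (snd s)))) [0..<length is - 1])"

text \<open>The order of sd(C): tau \<le> sigma iff tau is a face of sigma, i.e. obtained by choosing a
  nonempty subset of the vertices of sigma.\<close>
definition sd_le :: "('o,'m) cat \<Rightarrow> ('o,'m) simplex \<Rightarrow> ('o,'m) simplex \<Rightarrow> bool" where
  "sd_le C \<tau> \<sigma> \<longleftrightarrow> (\<exists>S. S \<noteq> {} \<and> S \<subseteq> {0..length (snd \<sigma>)} \<and>
      \<tau> = face C \<sigma> (sorted_list_of_set S))"

text \<open>sd(F): image chain F(x0) --F(a1)--> ... --F(ak)--> F(xk), taken as the (nondegenerate)
  simplex it determines, i.e. with identity morphisms removed.\<close>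
definition sd_map :: "('o,'m) cat \<Rightarrow> ('o \<Rightarrow> 'o) \<Rightarrow> ('m \<Rightarrow> 'm) \<Rightarrow> ('o,'m) simplex \<Rightarrow> ('o,'m) simplex" where
  "sd_map C Fo Fm s = (Fo (fst s), filter (\<lambda>a. \<not> is_identity C a) (map Fm (snd s)))"

end

theory Submission
  imports Defs
begin

fun chn :: "('o,'m) cat \<Rightarrow> 'm list \<Rightarrow> bool" where
  "chn C [] = True"
| "chn C [a] = (a \<in> Mor C)"
| "chn C (a # b # rest) = (a \<in> Mor C \<and> Cod C a = Dom C b \<and> chn C (b # rest))"

lemma all_nat_split: "(\<forall>i::nat. Q i) = (Q 0 \<and> (\<forall>i. Q (Suc i)))"
  by (metis nat.exhaust)

lemma chn_iff: "chn C bs \<longleftrightarrow> set bs \<subseteq> Mor C \<and>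
   (\<forall>i. Suc i < length bs \<longrightarrow> Cod C (bs!i) = Dom C (bs!Suc i))"
proof (induction C bs rule: chn.induct)
  case (3 C a b rest)
  show ?case
    apply (subst all_nat_split)
    using 3 by auto
qed auto

lemma chn_take_drop: "chn C bs \<Longrightarrow> chn C (take n (drop m bs))"
  unfolding chn_iff
  by (auto dest: in_set_takeD in_set_dropD simp: nth_take nth_drop)

lemma fold_props:
  assumes cat: "category C"
  shows "chn C (a # rs) \<Longrightarrow> foldl (\<lambda>acc b. Comp C b acc) a rs \<in> Mor C \<and>
     Dom C (foldl (\<lambda>acc b. Comp C b acc) a rs) = Dom C a \<and>
     Cod C (foldl (\<lambda>acc b. Comp C b acc) a rs) = Cod C (last (a # rs))"
proof (induction rs arbitrary: a)
  case Nil
  then show ?case by simp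
next
  case (Cons r rs)
  have a: "a \<in> Mor C" "Cod C a = Dom C r" "chn C (r # rs)" using Cons.prems by auto
  have r: "r \<in> Mor C" using a(3) by (cases rs) auto
  have c: "Comp C r a \<in> Mor C" "Dom C (Comp C r a) = Dom C a" "Cod C (Comp C r a) = Cod C r"
    using cat a r unfolding category_def by auto
  have "chn C (Comp C r a # rs)" using a(3) c by (cases rs) auto
  from Cons.IH[OF this] show ?case using c by simp
qed

lemma fold_assoc:
  assumes cat: "category C"
  shows "a \<in> Mor C \<Longrightarrow> Cod C a = Dom C b \<Longrightarrow> chn C (b # rs) \<Longrightarrow>
    foldl (\<lambda>acc b. Comp C b acc) (Comp C b a) rs = Comp C (foldl (\<lambda>acc b. Comp C b acc) b rs) a"
proof (induction rs arbitrary: b)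
  case Nil
  then show ?case by simp
next
  case (Cons r rs)
  have b: "b \<in> Mor C" "Cod C b = Dom C r" "chn C (r # rs)" using Cons.prems by auto
  have r: "r \<in> Mor C" using b(3) by (cases rs) auto
  have c: "Comp C r b \<in> Mor C" "Dom C (Comp C r b) = Dom C b" "Cod C (Comp C r b) = Cod C r"
    using cat b r unfolding category_def by auto
  have ch: "chn C (Comp C r b # rs)" using b(3) c by (cases rs) auto
  have "Comp C r (Comp C b a) = Comp C (Comp C r b) a"
    using cat b r Cons.prems(1,2) unfolding category_def by auto
  then show ?case using Cons.IH[OF Cons.prems(1) _ ch] c Cons.prems(2) by simp
qed

lemma fold_fix:
  assumes F: "is_functor C C Fo Fm" and cat: "category C"
  shows "chn C (a # rs) \<Longrightarrow> Fm a = a \<Longrightarrow> (\<forall>b\<in>set rs. Fm b = b) \<Longrightarrow>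
    Fm (foldl (\<lambda>acc b. Comp C b acc) a rs) = foldl (\<lambda>acc b. Comp C b acc) a rs"
proof (induction rs arbitrary: a)
  case Nil
  then show ?case by simp
next
  case (Cons r rs)
  have a: "a \<in> Mor C" "Cod C a = Dom C r" "chn C (r # rs)" using Cons.prems by auto
  have r: "r \<in> Mor C" using a(3) by (cases rs) auto
  have c: "Comp C r a \<in> Mor C" "Dom C (Comp C r a) = Dom C a" "Cod C (Comp C r a) = Cod C r"
    using cat a r unfolding category_def by auto
  have ch: "chn C (Comp C r a # rs)" using a(3) c by (cases rs) auto
  have "Fm (Comp C r a) = Comp C r a"
    using F a r Cons.prems unfolding is_functor_def by auto
  then show ?case using Cons.IH[OF ch] Cons.prems by simp
qed

lemma comp_nonid:
  assumes ac: "acyclic_category C"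
  shows "chn C (a # rs) \<Longrightarrow> \<not> is_identity C a \<Longrightarrow>
    \<not> is_identity C (foldl (\<lambda>acc b. Comp C b acc) a rs)"
proof (cases rs)
  case Nil
  then show "\<not> is_identity C a \<Longrightarrow> ?thesis" by simp
next
  case (Cons b rs')
  assume ch: "chn C (a # rs)" and na: "\<not> is_identity C a"
  have cat: "category C" using ac unfolding acyclic_category_def by auto
  have a: "a \<in> Mor C" "Cod C a = Dom C b" "chn C (b # rs')" using ch Cons by auto
  define g where "g = foldl (\<lambda>acc b. Comp C b acc) b rs'"
  have g: "g \<in> Mor C" "Dom C g = Dom C b"
    using fold_props[OF cat a(3)] unfolding g_def by auto
  have eq: "foldl (\<lambda>acc b. Comp C b acc) a rs = Comp C g a"
    using fold_assoc[OF cat a] Cons unfolding g_def by simp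
  have ga: "Comp C g a \<in> Mor C" "Dom C (Comp C g a) = Dom C a" "Cod C (Comp C g a) = Cod C g"
    using cat a g unfolding category_def by auto
  show ?thesis
  proof
    assume "is_identity C (foldl (\<lambda>acc b. Comp C b acc) a rs)"
    then obtain w where w: "w \<in> Obj C" "Comp C g a = Id C w"
      unfolding is_identity_def eq by auto
    have "Dom C (Id C w) = w" "Cod C (Id C w) = w" using cat w(1) unfolding category_def by auto
    hence gaid: "Comp C g a = Id C (Dom C a)" and cg: "Cod C g = Dom C a"
      using ga w by auto
    have ag: "Comp C a g \<in> Mor C" "Dom C (Comp C a g) = Dom C g" "Cod C (Comp C a g) = Cod C a"
      using cat a g cg unfolding category_def by auto
    hence "is_identity C (Comp C a g)" using ac g a unfolding acyclic_category_def by auto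
    then obtain v where v: "v \<in> Obj C" "Comp C a g = Id C v" unfolding is_identity_def by auto
    have "Dom C (Id C v) = v" using cat v(1) unfolding category_def by auto
    hence agid: "Comp C a g = Id C (Cod C a)" using v ag g a by auto
    have "is_iso C a" unfolding is_iso_def using a g cg gaid agid by auto
    hence "is_identity C a" using ac a unfolding acyclic_category_def by auto
    thus False using na by simp
  qed
qed


lemma seg_ok:
  assumes ac: "acyclic_category C" and F: "is_functor C C Fo Fm"
    and ch: "chn C bs" and ne: "bs \<noteq> []" and fx: "\<forall>b\<in>set bs. Fm b = b"
    and ni: "\<forall>b\<in>set bs. \<not> is_identity C b"
  shows "Fm (comp_list C bs) = comp_list C bs \<and> \<not> is_identity C (comp_list C bs)"
proof -
  have cat: "category C" using ac unfolding acyclic_category_def by auto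
  obtain a rs where bs: "bs = a # rs" using ne by (cases bs) auto
  show ?thesis unfolding comp_list_def bs using fold_fix[OF F cat] comp_nonid[OF ac] ch fx ni bs
    by auto
qed

theorem mainTheorem2:
  fixes C :: "('o,'m) cat" and Fo :: "'o \<Rightarrow> 'o" and Fm :: "'m \<Rightarrow> 'm"
    and \<sigma> \<tau> :: "('o,'m) simplex"
  assumes "acyclic_category C" and "finite_category C"
    and "is_functor C C Fo Fm"
    and "is_simplex C \<sigma>"
    and "sd_map C Fo Fm \<sigma> = \<sigma>"
    and "sd_le C \<tau> \<sigma>"
  shows "sd_map C Fo Fm \<tau> = \<tau>"
proof -
  note ac = assms(1) and F = assms(3)
  obtain x as where sig: "\<sigma> = (x, as)" by (cases \<sigma>)
  have simp: "x \<in> Obj C" "set as \<subseteq> Mor C" "\<forall>a\<in>set as. \<not> is_identity C a"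
     "\<forall>i. Suc i < length as \<longrightarrow> Cod C (as ! i) = Dom C (as ! Suc i)"
    using assms(4) unfolding is_simplex_def sig by auto
  have chas: "chn C as" using simp chn_iff by blast
  have fox: "Fo x = x" and flt: "filter (\<lambda>a. \<not> is_identity C a) (map Fm as) = as"
    using assms(5) unfolding sd_map_def sig by auto
  have "filter (\<lambda>a. \<not> is_identity C a) (map Fm as) = map Fm as"
  proof (rule ccontr)
    assume "filter (\<lambda>a. \<not> is_identity C a) (map Fm as) \<noteq> map Fm as"
    hence "\<exists>y\<in>set (map Fm as). \<not> \<not> is_identity C y"
      by (metis filter_True)
    hence "length (filter (\<lambda>a. \<not> is_identity C a) (map Fm as)) < length (map Fm as)"
      by (metis length_filter_less)
    thus False using flt by simp
  qed
  hence mp: "map Fm as = as" using flt by simp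
  have fixd: "\<forall>a\<in>set as. Fm a = a"
  proof
    fix a assume "a \<in> set as"
    then obtain i where i: "i < length as" "a = as ! i" by (auto simp: in_set_conv_nth)
    have "Fm (as ! i) = map Fm as ! i" using i by simp
    thus "Fm a = a" using mp i by simp
  qed
  obtain S where S: "S \<noteq> {}" "S \<subseteq> {0..length as}" and tau: "\<tau> = face C \<sigma> (sorted_list_of_set S)"
    using assms(6) unfolding sd_le_def sig by auto
  define "is" where "is = sorted_list_of_set S"
  have fin: "finite S" using S(2) finite_subset by blast
  have srt: "sorted_wrt (<) is" unfolding is_def by simp
  have setis: "set is = S" unfolding is_def using fin by simp
  have isne: "is \<noteq> []" using setis S(1) by auto
  have bnd: "\<And>l. l < length is \<Longrightarrow> is ! l \<le> length as" using setis S(2) nth_mem by fastforce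
  define seg where "seg = (\<lambda>l. comp_list C (take (is ! Suc l - is ! l) (drop (is ! l) as)))"
  have segok: "Fm (seg l) = seg l \<and> \<not> is_identity C (seg l)" if l: "l < length is - 1" for l
  proof -
    have lt: "is ! l < is ! Suc l" using srt l sorted_wrt_nth_less by fastforce
    have le: "is ! Suc l \<le> length as" using bnd l by simp
    let ?bs = "take (is ! Suc l - is ! l) (drop (is ! l) as)"
    have ne: "?bs \<noteq> []" using lt le by auto
    have sub: "set ?bs \<subseteq> set as" by (meson in_set_dropD in_set_takeD subsetI)
    show ?thesis unfolding seg_def
      using seg_ok[OF ac F chn_take_drop[OF chas] ne] sub fixd simp(3) by blast
  qed
  have vx: "Fo (vert C \<sigma> (hd is)) = vert C \<sigma> (hd is)"
  proof (cases "hd is = 0")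
    case True then show ?thesis unfolding vert_def sig using fox by simp
  next
    case False
    have "hd is \<le> length as" using bnd[of 0] isne by (simp add: hd_conv_nth)
    hence m: "as ! (hd is - 1) \<in> set as" using False by simp
    have "Fo (Cod C (as ! (hd is - 1))) = Cod C (Fm (as ! (hd is - 1)))"
      using F m simp(2) unfolding is_functor_def by auto
    then show ?thesis unfolding vert_def sig using False fixd m by simp
  qed
  have tau2: "\<tau> = (vert C \<sigma> (hd is), map seg [0..<length is - 1])"
    unfolding tau face_def is_def seg_def sig by simp
  have "map Fm (map seg [0..<length is - 1]) = map seg [0..<length is - 1]"
    using segok by simp
  moreover have "filter (\<lambda>a. \<not> is_identity C a) (map seg [0..<length is - 1]) = map seg [0..<length is - 1]"
    using segok by (simp add: filter_True)
  ultimately show ?thesis unfolding tau2 sd_map_def using vx by (metis fst_conv snd_conv)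
qed

end
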